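(* For every $n\ge1$ and every $\ell>0$, the maps $(\phi,\gamma)\mapsto\gamma\circ\phi$ give homeomorphisms \[ \mathcal G(\ell,n)\times N_n\cong\mathbb P^\ell_{0_n,1_n}\mathbb M^{\mathcal G}(|\square[n]|^t_{reg}),\qquad \mathcal G(\ell,n)\times\partial N_n\cong\mathbb P^\ell_{0_n,1_n}\mathbb M^{\mathcal G}(|\partial\square[n]|^t_{reg}). \] In particular, for $\ell=1$, $\mathcal G(1,n)\times N_n\cong\mathbb P^{top}_{0_n,1_n}|\square[n]|^t_{reg}$ and $\mathcal G(1,n)\times\partial N_n\cong\mathbb P^{top}_{0_n,1_n}|\partial\square[n]|^t_{reg}$ (for $n=1$ both sides of the boundary statement are empty).
   Context: $\mathbf{Top}$: $\Delta$-generated spaces; mapping spaces carry the $\Delta$-kelleyfication of the compact-open topology, subspaces the $\Delta$-kelleyfication of the relative topology. Precubical sets are presheaves on the box category $\square$; $\square[n]$ is representable, $\partial\square[n]$ its sub-presheaf of cubes of dimension $\le n-1$; $|K|_{geom}=\mathrm{colim}_{\square[n]\to K}[0,1]^n$, so $|\partial\square[n]|_{geom}$ is the boundary of $[0,1]^n$. $0_n=(0,\dots,0)$, $1_n=(1,\dots,1)$. A $d$-path of $[0,1]^n$ is a continuous map $[0,\ell]\to[0,1]^n$ nondecreasing in each coordinate; a $d$-path of $K$ is a Moore composition of images of $d$-paths of cubes under the maps $|c|_{geom}$, tame if the pieces can be chosen with endpoints at vertices. Regular: constant on no nondegenerate interval. $L_1$-arc length: $\sum_i|\gamma_i(t')-\gamma_i(t)|$,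 additive. A $d$-path of length $n$ is natural if the $L_1$-arc length of $\gamma|_{[0,t]}$ equals $t$. $N_n$ (resp. $\partial N_n$) is the space of tame natural $d$-paths $[0,n]\to[0,1]^n$ (resp. with image in $|\partial\square[n]|_{geom}$) from $0_n$ to $1_n$. $\mathcal G(\ell,n)$: nondecreasing homeomorphisms $[0,\ell]\to[0,n]$. Multipointed $d$-spaces $(|X|,X^0,\mathbb P^{top}X)$; $|K|^t_{reg}$ has underlying space $|K|_{geom}$, states $K_0$, execution paths the nonconstant tame regular $d$-paths $[0,1]\to|K|_{geom}$ between vertices. $\mathbb M^{\mathcal G}(X)$ is the Moore flow with $\mathbb P^\ell_{\alpha,\beta}\mathbb M^{\mathcal G}(X)=\{\gamma(t/\ell)\mid\gamma\in\mathbb P^{top}_{\alpha,\beta}X\}\subset\mathbf{TOP}([0,\ell],|X|)$. *)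

theory Defs
  imports "HOL-Analysis.Analysis" "HOL-Homology.Homology"
begin

abbreviation simplex_top :: "nat \<Rightarrow> (nat \<Rightarrow> real) topology" where
  "simplex_top p \<equiv> subtopology (powertop_real UNIV) (standard_simplex p)"

definition kdelta :: "'a topology \<Rightarrow> 'a topology" where
  "kdelta X = topology (\<lambda>U. U \<subseteq> topspace X \<and>
     (\<forall>p f. continuous_map (simplex_top p) X f \<longrightarrow>
        openin (simplex_top p) {x \<in> standard_simplex p. f x \<in> U}))"

text \<open>Continuous maps X -> Y, represented extensionally (undefined outside the
  underlying set of X).\<close>
definition cmaps :: "'a topology \<Rightarrow> 'b topology \<Rightarrow> ('a \<Rightarrow> 'b) set" where
  "cmaps X Y = {f. continuous_map X Y f \<and> f \<in> extensional (topspace X)}"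

definition compact_open :: "'a topology \<Rightarrow> 'b topology \<Rightarrow> ('a \<Rightarrow> 'b) topology" where
  "compact_open X Y = topology_generated_by
     (insert (cmaps X Y)
        {{f \<in> cmaps X Y. f ` K \<subseteq> U} | K U. compactin X K \<and> openin Y U})"

definition TOP :: "'a topology \<Rightarrow> 'b topology \<Rightarrow> ('a \<Rightarrow> 'b) topology" where
  "TOP X Y = kdelta (compact_open X Y)"

definition ksub :: "'a topology \<Rightarrow> 'a set \<Rightarrow> 'a topology" where
  "ksub X S = kdelta (subtopology X S)"

text \<open>Binary product in the category of Delta-generated spaces.\<close>
definition kprod :: "'a topology \<Rightarrow> 'b topology \<Rightarrow> ('a \<times> 'b) topology" where
  "kprod X Y = kdelta (prod_topology X Y)"

definition unit_cube :: "(real^'n::finite) set" where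
  "unit_cube = {x. \<forall>i. 0 \<le> x$i \<and> x$i \<le> 1}"

definition cube_boundary :: "(real^'n::finite) set" where
  "cube_boundary = {x \<in> unit_cube. \<exists>i. x$i = 0 \<or> x$i = 1}"

definition cube_vertices :: "(real^'n::finite) set" where
  "cube_vertices = {x. \<forall>i. x$i = 0 \<or> x$i = 1}"

text \<open>Images |c|_geom of the cubes c of dimension at most d of the precubical set
  square[n]: the faces of [0,1]^n obtained by freezing the coordinates in I to the
  values e i in {0,1}, with at most d free coordinates.  square[n] corresponds to
  d = n, its boundary to d = n - 1.\<close>
definition cube_faces :: "nat \<Rightarrow> (real^'n::finite) set set" where
  "cube_faces d = {{x \<in> unit_cube. \<forall>i\<in>I. x$i = e i} | I e.
      (\<forall>i\<in>I. e i = 0 \<or> e i = 1) \<and> card (UNIV - I) \<le> d}"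

definition cube_dpath :: "real \<Rightarrow> (real \<Rightarrow> real^'n::finite) \<Rightarrow> bool" where
  "cube_dpath l \<gamma> \<longleftrightarrow> continuous_on {0..l} \<gamma> \<and> \<gamma> ` {0..l} \<subseteq> unit_cube \<and>
     (\<forall>s t i. 0 \<le> s \<and> s \<le> t \<and> t \<le> l \<longrightarrow> \<gamma> s $ i \<le> \<gamma> t $ i)"

text \<open>Tame d-paths [0,l] of the precubical set consisting of the cubes of square[n]
  of dimension at most d: Moore compositions of d-paths of cubes of that set with
  endpoints of the pieces at vertices.\<close>
definition tame_dpath :: "nat \<Rightarrow> real \<Rightarrow> (real \<Rightarrow> real^'n::finite) \<Rightarrow> bool" where
  "tame_dpath d l \<gamma> \<longleftrightarrow> cube_dpath l \<gamma> \<and>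
     (\<exists>(k::nat) t. t 0 = 0 \<and> t k = l \<and> (\<forall>j<k. t j \<le> t (Suc j)) \<and>
        (\<forall>j\<le>k. \<gamma> (t j) \<in> cube_vertices) \<and>
        (\<forall>j<k. \<exists>F \<in> cube_faces d. \<gamma> ` {t j..t (Suc j)} \<subseteq> F))"

definition regular_path :: "real \<Rightarrow> (real \<Rightarrow> 'a) \<Rightarrow> bool" where
  "regular_path l \<gamma> \<longleftrightarrow> (\<forall>a b. 0 \<le> a \<and> a < b \<and> b \<le> l \<longrightarrow> (\<exists>t\<in>{a..b}. \<gamma> t \<noteq> \<gamma> a))"

text \<open>Natural: the L1 arc length of the restriction to [0,t] equals t.\<close>
definition natural_path :: "real \<Rightarrow> (real \<Rightarrow> real^'n::finite) \<Rightarrow> bool" where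
  "natural_path l \<gamma> \<longleftrightarrow> (\<forall>t\<in>{0..l}. (\<Sum>i\<in>UNIV. \<bar>\<gamma> t $ i - \<gamma> 0 $ i\<bar>) = t)"

abbreviation dimc :: "'n::finite itself \<Rightarrow> nat" where
  "dimc _ \<equiv> CARD('n)"

text \<open>Underlying sets of N_n (d = n) and of the boundary version (d = n - 1),
  as extensional maps on [0,n].\<close>
definition Nset :: "nat \<Rightarrow> (real \<Rightarrow> real^'n::finite) set" where
  "Nset d = {\<gamma> \<in> extensional {0..real CARD('n)}.
      tame_dpath d (real CARD('n)) \<gamma> \<and> natural_path (real CARD('n)) \<gamma> \<and>
      \<gamma> 0 = vec 0 \<and> \<gamma> (real CARD('n)) = vec 1}"

definition Ntop :: "nat \<Rightarrow> (real \<Rightarrow> real^'n::finite) topology" where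
  "Ntop d = ksub (TOP (top_of_set {0..real CARD('n)}) (top_of_set unit_cube)) (Nset d)"

definition Gset :: "real \<Rightarrow> nat \<Rightarrow> (real \<Rightarrow> real) set" where
  "Gset l n = {\<phi> \<in> extensional {0..l}.
      homeomorphic_map (top_of_set {0..l}) (top_of_set {0..real n}) \<phi> \<and> mono_on {0..l} \<phi>}"

definition Gtop :: "real \<Rightarrow> nat \<Rightarrow> (real \<Rightarrow> real) topology" where
  "Gtop l n = ksub (TOP (top_of_set {0..l}) (top_of_set {0..real n})) (Gset l n)"

text \<open>Execution paths of |K|^t_reg from 0_n to 1_n: nonconstant tame regular
  d-paths [0,1] -> |K|_geom (here K = cubes of square[n] of dimension at most d).\<close>
definition exec_paths :: "nat \<Rightarrow> (real \<Rightarrow> real^'n::finite) set" where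
  "exec_paths d = {\<gamma>. tame_dpath d 1 \<gamma> \<and> regular_path 1 \<gamma> \<and>
      (\<exists>s t. 0 \<le> s \<and> s \<le> 1 \<and> 0 \<le> t \<and> t \<le> 1 \<and> \<gamma> s \<noteq> \<gamma> t) \<and>
      \<gamma> 0 = vec 0 \<and> \<gamma> 1 = vec 1}"

text \<open>P^l_{0_n,1_n} M^G(|K|^t_reg) as a subset of TOP([0,l],|K|_geom).\<close>
definition Pset :: "real \<Rightarrow> nat \<Rightarrow> (real \<Rightarrow> real^'n::finite) set" where
  "Pset l d = {restrict (\<lambda>t. \<gamma> (t / l)) {0..l} | \<gamma>. \<gamma> \<in> exec_paths d}"

definition Ptop :: "real \<Rightarrow> nat \<Rightarrow> (real^'n::finite) set \<Rightarrow> (real \<Rightarrow> real^'n) topology" where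
  "Ptop l d K = ksub (TOP (top_of_set {0..l}) (top_of_set K)) (Pset l d)"

text \<open>P^top_{0_n,1_n} |K|^t_reg as a subset of TOP([0,1],|K|_geom).\<close>
definition PtopSet :: "nat \<Rightarrow> (real \<Rightarrow> real^'n::finite) set" where
  "PtopSet d = {restrict \<gamma> {0..1} | \<gamma>. \<gamma> \<in> exec_paths d}"

definition PtopTop :: "nat \<Rightarrow> (real^'n::finite) set \<Rightarrow> (real \<Rightarrow> real^'n) topology" where
  "PtopTop d K = ksub (TOP (top_of_set {0..1}) (top_of_set K)) (PtopSet d)"

definition reparam :: "real \<Rightarrow> (real \<Rightarrow> real) \<times> (real \<Rightarrow> 'a) \<Rightarrow> (real \<Rightarrow> 'a)" where
  "reparam l = (\<lambda>(\<phi>, \<gamma>). restrict (\<gamma> \<circ> \<phi>) {0..l})"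

end

theory Submission
  imports Defs
begin

lemma kdelta_istop:
  "istopology (\<lambda>U. U \<subseteq> topspace X \<and>
     (\<forall>p f. continuous_map (simplex_top p) X f \<longrightarrow>
        openin (simplex_top p) {x \<in> standard_simplex p. f x \<in> U}))"
  unfolding istopology_def
proof (rule conjI; intro allI impI)
  fix S T assume S: "S \<subseteq> topspace X \<and> (\<forall>p f. continuous_map (simplex_top p) X f \<longrightarrow>
        openin (simplex_top p) {x \<in> standard_simplex p. f x \<in> S})"
    and T: "T \<subseteq> topspace X \<and> (\<forall>p f. continuous_map (simplex_top p) X f \<longrightarrow>
        openin (simplex_top p) {x \<in> standard_simplex p. f x \<in> T})"
  show "S \<inter> T \<subseteq> topspace X \<and> (\<forall>p f. continuous_map (simplex_top p) X f \<longrightarrow>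
        openin (simplex_top p) {x \<in> standard_simplex p. f x \<in> S \<inter> T})"
  proof (intro conjI allI impI)
    fix p f assume "continuous_map (simplex_top p) X f"
    then have "openin (simplex_top p) ({x \<in> standard_simplex p. f x \<in> S} \<inter> {x \<in> standard_simplex p. f x \<in> T})"
      using S T by (intro openin_Int) auto
    moreover have "{x \<in> standard_simplex p. f x \<in> S \<inter> T} = {x \<in> standard_simplex p. f x \<in> S} \<inter> {x \<in> standard_simplex p. f x \<in> T}" by blast
    ultimately show "openin (simplex_top p) {x \<in> standard_simplex p. f x \<in> S \<inter> T}" by (simp add: image_subset_iff_funcset)
  qed (use S in blast)
next
  fix K assume K: "\<forall>S\<in>K. S \<subseteq> topspace X \<and> (\<forall>p f. continuous_map (simplex_top p) X f \<longrightarrow>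
        openin (simplex_top p) {x \<in> standard_simplex p. f x \<in> S})"
  show "\<Union>K \<subseteq> topspace X \<and> (\<forall>p f. continuous_map (simplex_top p) X f \<longrightarrow>
        openin (simplex_top p) {x \<in> standard_simplex p. f x \<in> \<Union>K})"
  proof (intro conjI allI impI)
    fix p f assume "continuous_map (simplex_top p) X f"
    then have "openin (simplex_top p) (\<Union>S\<in>K. {x \<in> standard_simplex p. f x \<in> S})"
      using K by (intro openin_Union) auto
    moreover have "{x \<in> standard_simplex p. f x \<in> \<Union>K} = (\<Union>S\<in>K. {x \<in> standard_simplex p. f x \<in> S})" by blast
    ultimately show "openin (simplex_top p) {x \<in> standard_simplex p. f x \<in> \<Union>K}" by (simp add: image_subset_iff_funcset)
  qed (use K in blast)
qed

lemma openin_kdelta: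
  "openin (kdelta X) U \<longleftrightarrow> U \<subseteq> topspace X \<and>
     (\<forall>p f. continuous_map (simplex_top p) X f \<longrightarrow>
        openin (simplex_top p) {x \<in> standard_simplex p. f x \<in> U})"
  unfolding kdelta_def topology_inverse'[OF kdelta_istop] by (rule refl)

lemma topspace_simplex_top [simp]: "topspace (simplex_top p) = standard_simplex p"
  by (simp add: image_subset_iff_funcset)

lemma openin_kdelta_of_openin:
  assumes "openin X U" shows "openin (kdelta X) U"
  unfolding openin_kdelta
proof (intro conjI allI impI)
  show "U \<subseteq> topspace X" using assms openin_subset by blast
  fix p f assume "continuous_map (simplex_top p) X f"
  from openin_continuous_map_preimage[OF this assms]
  show "openin (simplex_top p) {x \<in> standard_simplex p. f x \<in> U}" by (simp add: image_subset_iff_funcset)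
qed

lemma topspace_kdelta [simp]: "topspace (kdelta X) = topspace X"
proof
  show "topspace (kdelta X) \<subseteq> topspace X"
    using openin_kdelta[of X "topspace (kdelta X)"] by simp
  show "topspace X \<subseteq> topspace (kdelta X)"
    using openin_kdelta_of_openin[OF openin_topspace[of X]] openin_subset by blast
qed

lemma continuous_map_simplex_kdelta:
  "continuous_map (simplex_top p) (kdelta X) f \<longleftrightarrow> continuous_map (simplex_top p) X f"
proof
  assume "continuous_map (simplex_top p) (kdelta X) f"
  then show "continuous_map (simplex_top p) X f"
    unfolding continuous_map_def using openin_kdelta_of_openin by (simp, blast)
next
  assume c: "continuous_map (simplex_top p) X f"
  then show "continuous_map (simplex_top p) (kdelta X) f"
    unfolding continuous_map_def[of _ "kdelta X"] 
    unfolding continuous_map_def[of _ "kdelta X"]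
  proof (intro conjI allI impI)
    show "f \<in> topspace (simplex_top p) \<rightarrow> topspace (kdelta X)" using c by (simp add: continuous_map_def)
    fix U assume "openin (kdelta X) U"
    then show "openin (simplex_top p) {x \<in> topspace (simplex_top p). f x \<in> U}"
      unfolding openin_kdelta using c by simp
  qed
qed

lemma continuous_map_kdelta_kdelta:
  assumes "g \<in> topspace X \<rightarrow> topspace Y"
    and "\<And>p f. continuous_map (simplex_top p) X f \<Longrightarrow> continuous_map (simplex_top p) Y (g \<circ> f)"
  shows "continuous_map (kdelta X) (kdelta Y) g"
  unfolding continuous_map_def
proof (intro conjI allI impI)
  show "g \<in> topspace (kdelta X) \<rightarrow> topspace (kdelta Y)" using assms(1) by (simp add: image_subset_iff_funcset)
  fix U assume U: "openin (kdelta Y) U"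
  show "openin (kdelta X) {x \<in> topspace (kdelta X). g x \<in> U}"
    unfolding openin_kdelta
  proof (intro conjI allI impI)
    show "{x \<in> topspace (kdelta X). g x \<in> U} \<subseteq> topspace X" by auto
    fix p f assume f: "continuous_map (simplex_top p) X f"
    have "openin (simplex_top p) {x \<in> standard_simplex p. (g \<circ> f) x \<in> U}"
      using U assms(2)[OF f] unfolding openin_kdelta o_def by simp
    moreover have "{x \<in> standard_simplex p. f x \<in> {x \<in> topspace (kdelta X). g x \<in> U}}
        = {x \<in> standard_simplex p. (g \<circ> f) x \<in> U}"
      using f by (auto simp: continuous_map_def)
    ultimately show "openin (simplex_top p) {x \<in> standard_simplex p. f x \<in> {x \<in> topspace (kdelta X). g x \<in> U}}"
      by (simp add: image_subset_iff_funcset)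
  qed
qed

lemma continuous_map_simplex_ksub:
  "continuous_map (simplex_top p) (ksub (kdelta X) S) f \<longleftrightarrow>
     continuous_map (simplex_top p) X f \<and> f ` standard_simplex p \<subseteq> S"
  unfolding ksub_def continuous_map_simplex_kdelta continuous_map_in_subtopology by (simp add: image_subset_iff_funcset)

lemma continuous_map_simplex_kprod:
  "continuous_map (simplex_top p) (kprod X Y) f \<longleftrightarrow>
     continuous_map (simplex_top p) X (fst \<circ> f) \<and> continuous_map (simplex_top p) Y (snd \<circ> f)"
  unfolding kprod_def continuous_map_simplex_kdelta continuous_map_pairwise by (simp add: image_subset_iff_funcset)

lemma topspace_compact_open [simp]: "topspace (compact_open X Y) = cmaps X Y"
  unfolding compact_open_def topology_generated_by_topspace by auto

lemma openin_compact_open_basic: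
  assumes "compactin X K" "openin Y U"
  shows "openin (compact_open X Y) {f \<in> cmaps X Y. f ` K \<subseteq> U}"
  unfolding compact_open_def using assms by (intro topology_generated_by_Basis) blast

lemma cont_into_compact_open:
  assumes g: "continuous_map (prod_topology Z A) B g"
  shows "continuous_map Z (compact_open A B) (\<lambda>z. restrict (\<lambda>a. g (z,a)) (topspace A))"
  (is "continuous_map Z _ ?F")
proof -
  have Fc: "?F z \<in> cmaps A B" if z: "z \<in> topspace Z" for z
  proof -
    have "continuous_map A B (\<lambda>a. g (z,a))"
      using continuous_map_compose[OF _ g, of A "\<lambda>a. (z,a)"] z
      by (simp add: continuous_map_pairwise o_def)
    then have "continuous_map A B (?F z)"
      by (rule continuous_map_eq) simp
    then show ?thesis unfolding cmaps_def by simp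
  qed
  have "openin Z {z \<in> topspace Z. ?F z \<in> U}" if "openin (compact_open A B) U" for U
  proof -
    from that have "generate_topology_on (insert (cmaps A B)
        {{f \<in> cmaps A B. f ` K \<subseteq> U} | K U. compactin A K \<and> openin B U}) U"
      unfolding compact_open_def by (rule openin_topology_generated_by)
    then show ?thesis
    proof induction
      case Empty then show ?case by simp
    next
      case (Int a b)
      have eq: "{z \<in> topspace Z. ?F z \<in> a \<inter> b} = {z \<in> topspace Z. ?F z \<in> a} \<inter> {z \<in> topspace Z. ?F z \<in> b}" by blast
      show ?case unfolding eq using Int.IH by (rule openin_Int)
    next
      case (UN K)
      have eq: "{z \<in> topspace Z. ?F z \<in> \<Union>K} = (\<Union>k\<in>K. {z \<in> topspace Z. ?F z \<in> k})" by blast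
      show ?case unfolding eq using UN.IH unfolding restrict_def by (intro openin_Union) auto
    next
      case (Basis s)
      then consider "s = cmaps A B" | K V where "s = {f \<in> cmaps A B. f ` K \<subseteq> V}" "compactin A K" "openin B V"
        by blast
      then show ?case
      proof cases
        case 1
        have eq: "{z \<in> topspace Z. ?F z \<in> s} = topspace Z"
          using Fc unfolding 1 by (intro equalityI subsetI) auto
        show ?thesis unfolding eq by simp
      next
        case 2
        have eq: "{z \<in> topspace Z. ?F z \<in> s} = {z \<in> topspace Z. \<forall>a\<in>K. g (z,a) \<in> V}"
          using 2 Fc compactin_subset_topspace[OF 2(2)] by (auto simp: image_subset_iff)
        have "openin Z {z \<in> topspace Z. \<forall>a\<in>K. g (z,a) \<in> V}"
        proof (subst openin_subopen, intro ballI)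
          fix z0 assume z0: "z0 \<in> {z \<in> topspace Z. \<forall>a\<in>K. g (z,a) \<in> V}"
          define W where "W = {x \<in> topspace (prod_topology Z A). g x \<in> V}"
          have W: "openin (prod_topology Z A) W"
            unfolding W_def using g 2(3) by (rule openin_continuous_map_preimage)
          have z0': "z0 \<in> topspace Z" and z0K: "\<forall>a\<in>K. g (z0,a) \<in> V" using z0 by auto
          have KA: "K \<subseteq> topspace A" using compactin_subset_topspace[OF 2(2)] .
          have "{z0} \<times> K \<subseteq> W"
          proof
            fix x assume "x \<in> {z0} \<times> K"
            then obtain a where a: "x = (z0,a)" "a \<in> K" by blast
            then show "x \<in> W" using z0' z0K KA unfolding W_def by auto
          qed
          from tube_lemma_right[OF W 2(2) z0' this]
          obtain U1 V1 where UV: "openin Z U1" "openin A V1" "z0 \<in> U1" "K \<subseteq> V1" "U1 \<times> V1 \<subseteq> W"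
            by blast
          have "U1 \<subseteq> {z \<in> topspace Z. \<forall>a\<in>K. g (z,a) \<in> V}"
          proof
            fix z assume z: "z \<in> U1"
            have "z \<in> topspace Z" using openin_subset[OF UV(1)] z by blast
            moreover have "g (z,a) \<in> V" if "a \<in> K" for a
            proof -
              have "(z,a) \<in> W" using UV(4,5) z that by blast
              then show ?thesis unfolding W_def by simp
            qed
            ultimately show "z \<in> {z \<in> topspace Z. \<forall>a\<in>K. g (z,a) \<in> V}" by simp
          qed
          then show "\<exists>T. openin Z T \<and> z0 \<in> T \<and> T \<subseteq> {z \<in> topspace Z. \<forall>a\<in>K. g (z,a) \<in> V}"
            using UV(1,3) by blast
        qed
        then show ?thesis unfolding eq .
      qed
    qed
  qed
  then show ?thesis unfolding continuous_map_def using Fc by simp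
qed

lemma compact_open_joint:
  fixes S :: "real set"
  assumes F: "continuous_map Z (compact_open (top_of_set S) B) F" and S: "closed S"
  shows "continuous_map (prod_topology Z (top_of_set S)) B (\<lambda>(z,a). F z a)"
proof -
  have Fc: "F z \<in> cmaps (top_of_set S) B" if "z \<in> topspace Z" for z
    using F that unfolding continuous_map_def topspace_compact_open by (simp add: Pi_iff)
  have top: "(\<lambda>(z,a). F z a) \<in> topspace (prod_topology Z (top_of_set S)) \<rightarrow> topspace B"
    using Fc by (auto simp: cmaps_def continuous_map_def)
  have "openin (prod_topology Z (top_of_set S)) {x \<in> topspace (prod_topology Z (top_of_set S)). (\<lambda>(z,a). F z a) x \<in> U}"
    if U: "openin B U" for U
  proof (subst openin_subopen, intro ballI)
    fix x assume x: "x \<in> {x \<in> topspace (prod_topology Z (top_of_set S)). (\<lambda>(z,a). F z a) x \<in> U}"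
    obtain z0 a0 where x0: "x = (z0,a0)" by (cases x) blast
    have z0: "z0 \<in> topspace Z" and a0: "a0 \<in> S" and Fa0: "F z0 a0 \<in> U" using x x0 by auto
    have "continuous_map (top_of_set S) B (F z0)" using Fc[OF z0] by (simp add: cmaps_def)
    then have "openin (top_of_set S) {a \<in> S. F z0 a \<in> U}"
      using openin_continuous_map_preimage[OF _ U, of "top_of_set S" "F z0"] by simp
    then obtain e where e: "e > 0" "ball a0 e \<inter> S \<subseteq> {a \<in> S. F z0 a \<in> U}"
      using a0 Fa0 unfolding openin_contains_ball by blast
    define K where "K = S \<inter> cball a0 (e/2)"
    have "compact K" unfolding K_def using S by (simp add: closed_Int_compact)
    then have K: "compactin (top_of_set S) K"
      by (simp add: compactin_subtopology K_def)
    have KU: "F z0 ` K \<subseteq> U"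
    proof
      fix y assume "y \<in> F z0 ` K"
      then obtain a where a: "a \<in> S" "dist a0 a \<le> e/2" "y = F z0 a" unfolding K_def by auto
      then have "a \<in> ball a0 e \<inter> S" using e(1) by auto
      then show "y \<in> U" using e(2) a by auto
    qed
    define W where "W = {z \<in> topspace Z. F z \<in> {f \<in> cmaps (top_of_set S) B. f ` K \<subseteq> U}}"
    have W: "openin Z W"
      unfolding W_def by (rule openin_continuous_map_preimage[OF F openin_compact_open_basic[OF K U]])
    have "z0 \<in> W" unfolding W_def using z0 Fc[OF z0] KU by simp
    moreover have "openin (top_of_set S) (S \<inter> ball a0 (e/2))"
      by (simp add: openin_open_Int)
    ultimately have "openin (prod_topology Z (top_of_set S)) (W \<times> (S \<inter> ball a0 (e/2)))"
      "x \<in> W \<times> (S \<inter> ball a0 (e/2))"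
      using W x0 a0 e by (auto simp: openin_prod_Times_iff)
    moreover have "W \<times> (S \<inter> ball a0 (e/2)) \<subseteq> {x \<in> topspace (prod_topology Z (top_of_set S)). (\<lambda>(z,a). F z a) x \<in> U}"
      unfolding W_def K_def by auto
    ultimately show "\<exists>T. openin (prod_topology Z (top_of_set S)) T \<and> x \<in> T \<and>
        T \<subseteq> {x \<in> topspace (prod_topology Z (top_of_set S)). (\<lambda>(z,a). F z a) x \<in> U}" by blast
  qed
  then show ?thesis unfolding continuous_map_def using top by blast
qed

definition sig :: "real^'n::finite \<Rightarrow> real" where "sig x = (\<Sum>i\<in>UNIV. x$i)"

lemma unit_cube_iff: "x \<in> unit_cube \<longleftrightarrow> (\<forall>i. 0 \<le> x$i \<and> x$i \<le> 1)"
  by (simp add: unit_cube_def)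

lemma sig_vec0 [simp]: "sig (vec 0 :: real^'n::finite) = 0" by (simp add: sig_def)
lemma sig_vec1 [simp]: "sig (vec 1 :: real^'n::finite) = real CARD('n)" by (simp add: sig_def)
lemma vec01: "(vec 0 :: real^'n::finite) \<noteq> vec 1"
proof
  assume "(vec 0 :: real^'n::finite) = vec 1"
  then have "(vec 0 :: real^'n) $ undefined = vec 1 $ undefined" by simp
  then show False by simp
qed

lemma continuous_on_sig: "continuous_on S f \<Longrightarrow> continuous_on S (\<lambda>x. sig (f x))"
  unfolding sig_def by (intro continuous_intros)

lemma sig_mono: "(\<And>i. x$i \<le> y$i) \<Longrightarrow> sig x \<le> sig y"
  unfolding sig_def by (intro sum_mono) auto

lemma sig_eq_imp_eq:
  assumes "\<And>i. x$i \<le> y$i" "sig x = sig y" shows "x = y"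
proof -
  have "(\<Sum>i\<in>UNIV. y$i - x$i) = 0" using assms(2) unfolding sig_def by (simp add: sum_subtractf)
  then have "\<forall>i\<in>UNIV. y$i - x$i = 0" using assms(1) by (subst (asm) sum_nonneg_eq_0_iff) auto
  then show ?thesis by (simp add: vec_eq_iff)
qed

lemma chain_bounds:
  fixes t :: "nat \<Rightarrow> real"
  assumes "\<forall>j<k. t j \<le> t (Suc j)" "j \<le> k" shows "t 0 \<le> t j" "t j \<le> t k"
proof -
  have m: "\<And>n. n \<in> {..<k} \<Longrightarrow> t n \<le> t (Suc n)" using assms(1) by auto
  show "t 0 \<le> t j" by (rule lift_Suc_mono_le_ivl[where N="{..<k}" and f=t, OF m]) (use assms(2) in auto)
  show "t j \<le> t k" by (rule lift_Suc_mono_le_ivl[where N="{..<k}" and f=t, OF m]) (use assms(2) in auto)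
qed

lemma chain_cover:
  fixes t :: "nat \<Rightarrow> real"
  assumes "\<forall>j<k. t j \<le> t (Suc j)" "0 < k" "t 0 \<le> s" "s \<le> t k"
  shows "\<exists>j<k. t j \<le> s \<and> s \<le> t (Suc j)"
  using assms
proof (induction k)
  case 0 then show ?case by simp
next
  case (Suc m)
  show ?case
  proof (cases "s \<le> t m")
    case True
    show ?thesis
    proof (cases "m = 0")
      case True then show ?thesis using Suc.prems \<open>s \<le> t m\<close> by (intro exI[of _ 0]) auto
    next
      case False
      then obtain j where "j<m" "t j \<le> s \<and> s \<le> t (Suc j)" using Suc.IH Suc.prems \<open>s \<le> t m\<close> by auto
      then show ?thesis by (intro exI[of _ j]) auto
    qed
  next
    case False then show ?thesis using Suc.prems by (intro exI[of _ m]) auto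
  qed
qed

lemma tame_image:
  assumes "tame_dpath d l \<gamma>" "0 < l" "s \<in> {0..l}"
  shows "\<exists>F \<in> cube_faces d. \<gamma> s \<in> F"
proof -
  obtain k t where kt: "t 0 = 0" "t k = l" "\<forall>j<k. t j \<le> t (Suc j)"
     "\<forall>j<k. \<exists>F \<in> cube_faces d. \<gamma> ` {t j..t (Suc j)} \<subseteq> F"
    using assms(1) unfolding tame_dpath_def by (elim conjE exE) (rule that, assumption+)
  have "k \<noteq> 0"
  proof
    assume "k = 0" then have "l = 0" using kt by simp
    then show False using assms(2) by simp
  qed
  have "t 0 \<le> s" "s \<le> t k" using kt(1,2) assms(3) by auto
  from chain_cover[OF kt(3) _ this] \<open>k \<noteq> 0\<close>
  obtain j where j: "j<k" "t j \<le> s" "s \<le> t (Suc j)" by auto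
  obtain F where F: "F \<in> cube_faces d" "\<gamma> ` {t j..t (Suc j)} \<subseteq> F" using kt(4) j(1) by blast
  have "\<gamma> s \<in> \<gamma> ` {t j..t (Suc j)}" using j by auto
  then show ?thesis using F by blast
qed

lemma face_sub_cube: "F \<in> cube_faces d \<Longrightarrow> F \<subseteq> unit_cube"
  unfolding cube_faces_def by auto

lemma face_sub_boundary:
  assumes "F \<in> cube_faces d" "d < CARD('n)" shows "F \<subseteq> (cube_boundary :: (real^'n::finite) set)"
proof -
  obtain I e where F: "F = {x \<in> unit_cube. \<forall>i\<in>I. x$i = e i}" "\<forall>i\<in>I. e i = 0 \<or> e i = 1"
     "card (UNIV - I) \<le> d"
    using assms(1) unfolding cube_faces_def by blast
  have "I \<noteq> {}"
  proof
    assume "I = {}" then have "card (UNIV :: 'n set) \<le> d" using F(3) by simp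
    then show False using assms(2) by simp
  qed
  then obtain i where "i \<in> I" by blast
  show ?thesis
  proof
    fix x assume "x \<in> F"
    then have x: "x \<in> unit_cube" "x$i = e i" using F \<open>i \<in> I\<close> by auto
    have "e i = 0 \<or> e i = 1" using F(2) \<open>i \<in> I\<close> by blast
    then show "x \<in> cube_boundary" unfolding cube_boundary_def using x by auto
  qed
qed

lemma cube_dpathD:
  assumes "cube_dpath l f"
  shows "continuous_on {0..l} f" "\<And>t. t \<in> {0..l} \<Longrightarrow> f t \<in> unit_cube"
    "\<And>s t i. 0 \<le> s \<Longrightarrow> s \<le> t \<Longrightarrow> t \<le> l \<Longrightarrow> f s $ i \<le> f t $ i"
  using assms unfolding cube_dpath_def by auto

lemma tame_dpathD:
  assumes "tame_dpath d l f"
  obtains k t where "cube_dpath l f" "t 0 = 0" "t k = l" "\<forall>j<k. t j \<le> t (Suc j)"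
     "\<forall>j\<le>k. f (t j) \<in> cube_vertices"
     "\<forall>j<k. \<exists>F \<in> cube_faces d. f ` {t j..t (Suc j)} \<subseteq> F"
  using assms unfolding tame_dpath_def by (elim conjE exE) (rule that, assumption+)

lemma tame_dpathI:
  assumes "cube_dpath l f" "t 0 = 0" "t k = l" "\<forall>j<k. t j \<le> t (Suc j)"
     "\<forall>j\<le>k. f (t j) \<in> cube_vertices"
     "\<forall>j<k. \<exists>F \<in> cube_faces d. f ` {t j..t (Suc j)} \<subseteq> F"
  shows "tame_dpath d l f"
  unfolding tame_dpath_def using assms by (intro conjI exI[of _ k] exI[of _ t]) auto

lemma cube_dpathI:
  assumes "continuous_on {0..l} f" "\<And>t. t \<in> {0..l} \<Longrightarrow> f t \<in> unit_cube"
    "\<And>s t i. 0 \<le> s \<Longrightarrow> s \<le> t \<Longrightarrow> t \<le> l \<Longrightarrow> f s $ i \<le> f t $ i"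
  shows "cube_dpath l f"
  using assms unfolding cube_dpath_def by auto

lemma tame_dpath_cong:
  assumes "tame_dpath d l f" "\<And>t. t \<in> {0..l} \<Longrightarrow> f t = g t"
  shows "tame_dpath d l g"
proof -
  obtain k t where kt: "cube_dpath l f" "t 0 = 0" "t k = l" "\<forall>j<k. t j \<le> t (Suc j)"
     "\<forall>j\<le>k. f (t j) \<in> cube_vertices"
     "\<forall>j<k. \<exists>F \<in> cube_faces d. f ` {t j..t (Suc j)} \<subseteq> F"
    using tame_dpathD[OF assms(1)] by blast
  note fd = cube_dpathD[OF kt(1)]
  have cd: "cube_dpath l g"
  proof (rule cube_dpathI)
    show "continuous_on {0..l} g" using fd(1) assms(2) by (rule continuous_on_eq)
    show "g t \<in> unit_cube" if "t \<in> {0..l}" for t using fd(2)[OF that] assms(2)[OF that] by simp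
    show "g s $ i \<le> g t $ i" if "0 \<le> s" "s \<le> t" "t \<le> l" for s t i
      using fd(3)[OF that, of i] assms(2)[of s] assms(2)[of t] that by simp
  qed
  have tb: "t j \<in> {0..l}" if "j \<le> k" for j using chain_bounds[OF kt(4) that] kt by auto
  have "\<forall>j\<le>k. g (t j) \<in> cube_vertices" using kt(5) tb assms(2) by auto
  moreover have "\<forall>j<k. \<exists>F \<in> cube_faces d. g ` {t j..t (Suc j)} \<subseteq> F"
  proof (intro allI impI)
    fix j assume j: "j < k"
    then obtain F where F: "F \<in> cube_faces d" "f ` {t j..t (Suc j)} \<subseteq> F" using kt(6) by blast
    have "{t j..t (Suc j)} \<subseteq> {0..l}" using tb[of j] tb[of "Suc j"] j by auto
    then have "g ` {t j..t (Suc j)} = f ` {t j..t (Suc j)}"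
      by (intro image_cong refl) (use assms(2) in auto)
    then show "\<exists>F \<in> cube_faces d. g ` {t j..t (Suc j)} \<subseteq> F" using F by auto
  qed
  ultimately show ?thesis using tame_dpathI[OF cd kt(2,3,4)] by blast
qed

definition incb :: "real \<Rightarrow> real \<Rightarrow> (real \<Rightarrow> real) \<Rightarrow> bool" where
  "incb a b f \<longleftrightarrow> 0 < a \<and> continuous_on {0..a} f \<and> strict_mono_on {0..a} f \<and> f 0 = 0 \<and> f a = b"

lemma incb_props:
  assumes "incb a b f"
  shows "f ` {0..a} = {0..b}" "inj_on f {0..a}" "mono_on {0..a} f" "0 < a" "0 < b"
    "continuous_on {0..a} f" "f 0 = 0" "f a = b"
proof -
  have a: "0 < a" and c: "continuous_on {0..a} f" and sm: "strict_mono_on {0..a} f"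
    and f0: "f 0 = 0" and fa: "f a = b" using assms unfolding incb_def by auto
  show "inj_on f {0..a}" using sm by (rule strict_mono_on_imp_inj_on)
  show m: "mono_on {0..a} f" using sm by (rule strict_mono_on_imp_mono_on)
  show "0 < a" "continuous_on {0..a} f" "f 0 = 0" "f a = b" by fact+
  show "0 < b" using strict_mono_onD[OF sm, of 0 a] a f0 fa by simp
  show "f ` {0..a} = {0..b}"
  proof
    show "f ` {0..a} \<subseteq> {0..b}"
    proof
      fix y assume "y \<in> f ` {0..a}"
      then obtain x where x: "x \<in> {0..a}" "y = f x" by blast
      have "f 0 \<le> f x" "f x \<le> f a" using mono_onD[OF m] x a by auto
      then show "y \<in> {0..b}" using x f0 fa by simp
    qed
    show "{0..b} \<subseteq> f ` {0..a}"
    proof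
      fix y assume y: "y \<in> {0..b}"
      obtain x where "0 \<le> x" "x \<le> a" "f x = y" using IVT'[of f 0 y a, OF _ _ _ c] y f0 fa a by auto
      then show "y \<in> f ` {0..a}" by force
    qed
  qed
qed

lemma incb_inv:
  assumes "incb a b f"
  defines "g \<equiv> inv_into {0..a} f"
  shows "incb b a g" "\<And>t. t \<in> {0..b} \<Longrightarrow> g t \<in> {0..a}" "\<And>t. t \<in> {0..b} \<Longrightarrow> f (g t) = t"
    "\<And>s. s \<in> {0..a} \<Longrightarrow> g (f s) = s"
proof -
  note P = incb_props[OF assms(1)]
  show gi: "\<And>t. t \<in> {0..b} \<Longrightarrow> g t \<in> {0..a}" unfolding g_def using P(1) by (metis inv_into_into)
  show fg: "\<And>t. t \<in> {0..b} \<Longrightarrow> f (g t) = t" unfolding g_def using P(1) by (metis f_inv_into_f)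
  show gf: "\<And>s. s \<in> {0..a} \<Longrightarrow> g (f s) = s" unfolding g_def using P(2) by (rule inv_into_f_f)
  have "continuous_on (f ` {0..a}) g" using continuous_on_inv[OF P(6) compact_Icc] gf by blast
  then have c: "continuous_on {0..b} g" using P(1) by simp
  have sm: "strict_mono_on {0..b} g"
  proof (rule strict_mono_onI)
    fix r s assume rs: "r \<in> {0..b}" "s \<in> {0..b}" "r < s"
    show "g r < g s"
    proof (rule ccontr)
      assume "\<not> g r < g s"
      then have "g s \<le> g r" by simp
      then have "f (g s) \<le> f (g r)" using mono_onD[OF P(3)] gi rs by blast
      then show False using fg rs by simp
    qed
  qed
  have "g 0 = 0" using gf[of 0] P(4,7) by simp
  moreover have "g b = a" using gf[of a] P(4,8) by simp
  ultimately show "incb b a g" unfolding incb_def using c sm P(5) by simp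
qed

lemma incb_cong:
  assumes "incb a b f" "\<And>t. t \<in> {0..a} \<Longrightarrow> f t = g t"
  shows "incb a b g"
proof -
  note P = incb_props[OF assms(1)]
  have "continuous_on {0..a} g" using P(6) assms(2) by (rule continuous_on_eq)
  moreover have "strict_mono_on {0..a} g"
    using assms unfolding incb_def strict_mono_on_def by auto
  moreover have "g 0 = 0" "g a = b" using assms(2)[of 0] assms(2)[of a] P(4,7,8) by auto
  ultimately show ?thesis using P(4) unfolding incb_def by simp
qed

lemma incb_scale_dom:
  assumes "incb a b f" "0 < c"
  shows "incb (a/c) b (\<lambda>s. f (s * c))"
proof -
  note P = incb_props[OF assms(1)]
  have "continuous_on {0..a/c} (\<lambda>s. f (s * c))"
  proof (rule continuous_on_compose2[OF P(6)])
    show "continuous_on {0..a/c} (\<lambda>s. s * c)" by (intro continuous_intros)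
    show "(\<lambda>s. s * c) ` {0..a/c} \<subseteq> {0..a}" using assms(2) by (auto simp: field_simps)
  qed
  moreover have "strict_mono_on {0..a/c} (\<lambda>s. f (s * c))"
  proof (rule strict_mono_onI)
    fix r s assume "r \<in> {0..a/c}" "s \<in> {0..a/c}" "r < s"
    then show "f (r * c) < f (s * c)" using assms(1,2) unfolding incb_def
      by (intro strict_mono_onD[of "{0..a}" f]) (auto simp: field_simps)
  qed
  ultimately show ?thesis using P(4,7,8) assms(2) unfolding incb_def by simp
qed

lemma incb_scale_cod:
  assumes "incb a b f" "0 < c"
  shows "incb a (b/c) (\<lambda>s. f s / c)"
proof -
  note P = incb_props[OF assms(1)]
  have "continuous_on {0..a} (\<lambda>s. f s / c)" using P(6) assms(2) by (intro continuous_intros) auto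
  moreover have "strict_mono_on {0..a} (\<lambda>s. f s / c)"
  proof (rule strict_mono_onI)
    fix r s assume "r \<in> {0..a}" "s \<in> {0..a}" "r < s"
    then have "f r < f s" using assms(1) unfolding incb_def by (intro strict_mono_onD[of "{0..a}" f]) auto
    then show "f r / c < f s / c" using assms(2) by (simp add: divide_strict_right_mono)
  qed
  ultimately show ?thesis using P(4,7,8) assms(2) unfolding incb_def by simp
qed

lemma tame_comp:
  assumes tame: "tame_dpath d b \<gamma>" and h: "incb a b h"
  shows "tame_dpath d a (\<gamma> \<circ> h)"
proof -
  note P = incb_props[OF h]
  define g where "g = inv_into {0..a} h"
  note I = incb_inv[OF h, folded g_def]
  note Q = incb_props[OF I(1)]
  obtain k t where kt: "cube_dpath b \<gamma>" "t 0 = 0" "t k = b" "\<forall>j<k. t j \<le> t (Suc j)"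
     "\<forall>j\<le>k. \<gamma> (t j) \<in> cube_vertices"
     "\<forall>j<k. \<exists>F \<in> cube_faces d. \<gamma> ` {t j..t (Suc j)} \<subseteq> F"
    using tame_dpathD[OF tame] by blast
  note gd = cube_dpathD[OF kt(1)]
  have hin: "h s \<in> {0..b}" if "s \<in> {0..a}" for s using P(1) that by blast
  have cd: "cube_dpath a (\<gamma> \<circ> h)"
  proof (rule cube_dpathI)
    show "continuous_on {0..a} (\<gamma> \<circ> h)"
      using continuous_on_compose[OF P(6)] gd(1) P(1) by simp
    show "(\<gamma> \<circ> h) t \<in> unit_cube" if "t \<in> {0..a}" for t using gd(2) hin that by simp
    show "(\<gamma> \<circ> h) s $ i \<le> (\<gamma> \<circ> h) t $ i" if "0 \<le> s" "s \<le> t" "t \<le> a" for s t i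
    proof -
      have "h s \<le> h t" using mono_onD[OF P(3)] that by auto
      moreover have "0 \<le> h s" "h t \<le> b" using hin[of s] hin[of t] that by auto
      ultimately show ?thesis using gd(3) by simp
    qed
  qed
  have tb: "t j \<in> {0..b}" if "j \<le> k" for j using chain_bounds[OF kt(4) that] kt by auto
  have "(g \<circ> t) 0 = 0" using Q(7) kt(2) by simp
  moreover have "(g \<circ> t) k = a" using Q(8) kt(3) by simp
  moreover have "\<forall>j<k. (g \<circ> t) j \<le> (g \<circ> t) (Suc j)"
    using kt(4) tb mono_onD[OF Q(3)] by simp
  moreover have "\<forall>j\<le>k. (\<gamma> \<circ> h) ((g \<circ> t) j) \<in> cube_vertices"
    using kt(5) tb I(3) by simp
  moreover have "\<forall>j<k. \<exists>F \<in> cube_faces d. (\<gamma> \<circ> h) ` {(g \<circ> t) j..(g \<circ> t) (Suc j)} \<subseteq> F"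
  proof (intro allI impI)
    fix j assume j: "j < k"
    then obtain F where F: "F \<in> cube_faces d" "\<gamma> ` {t j..t (Suc j)} \<subseteq> F" using kt(6) by blast
    have "h x \<in> {t j..t (Suc j)}" if x: "x \<in> {g (t j)..g (t (Suc j))}" for x
    proof -
      have "g (t j) \<in> {0..a}" "g (t (Suc j)) \<in> {0..a}" using I(2) tb j by auto
      then have xa: "x \<in> {0..a}" using x by auto
      have "h (g (t j)) \<le> h x" "h x \<le> h (g (t (Suc j)))"
        using mono_onD[OF P(3)] xa x \<open>g (t j) \<in> {0..a}\<close> \<open>g (t (Suc j)) \<in> {0..a}\<close> by auto
      then show ?thesis using I(3) tb j by auto
    qed
    then have "(\<gamma> \<circ> h) ` {(g \<circ> t) j..(g \<circ> t) (Suc j)} \<subseteq> \<gamma> ` {t j..t (Suc j)}" by auto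
    then show "\<exists>F \<in> cube_faces d. (\<gamma> \<circ> h) ` {(g \<circ> t) j..(g \<circ> t) (Suc j)} \<subseteq> F" using F by blast
  qed
  ultimately show ?thesis by (rule tame_dpathI[OF cd])
qed

definition invphi :: "real \<Rightarrow> (real \<Rightarrow> real^'n::finite) \<Rightarrow> (real \<Rightarrow> real)" where
  "invphi l p = restrict (\<lambda>t. sig (p t)) {0..l}"

definition invgam :: "real \<Rightarrow> (real \<Rightarrow> real^'n::finite) \<Rightarrow> (real \<Rightarrow> real^'n)" where
  "invgam l p = restrict (\<lambda>t. p (inv_into {0..l} (\<lambda>s. sig (p s)) t)) {0..real CARD('n)}"

lemma sig_0 [simp]: "sig (0 :: real^'n::finite) = 0" by (simp add: sig_def)
lemma sig_1 [simp]: "sig (1 :: real^'n::finite) = real CARD('n)" by (simp add: sig_def)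

lemma card_pos: "0 < real CARD('n::finite)" by simp

lemma G_incb:
  assumes "\<phi> \<in> Gset l n" "0 < l" "0 < n"
  shows "incb l (real n) \<phi>"
proof -
  have G: "\<phi> \<in> extensional {0..l} \<and> homeomorphic_map (top_of_set {0..l}) (top_of_set {0..real n}) \<phi> \<and> mono_on {0..l} \<phi>"
    using assms(1) unfolding Gset_def by (simp only: mem_Collect_eq)
  then have h: "homeomorphic_map (top_of_set {0..l}) (top_of_set {0..real n}) \<phi>" by (elim conjE)
  from G have m: "mono_on {0..l} \<phi>" by (elim conjE)
  have c: "continuous_on {0..l} \<phi>" using homeomorphic_imp_continuous_map[OF h] by simp
  have im: "\<phi> ` {0..l} = {0..real n}" using homeomorphic_imp_surjective_map[OF h] by simp
  have inj: "inj_on \<phi> {0..l}" using homeomorphic_imp_injective_map[OF h] by simp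
  have sm: "strict_mono_on {0..l} \<phi>"
  proof (rule strict_mono_onI)
    fix r s assume rs: "r \<in> {0..l}" "s \<in> {0..l}" "r < s"
    then have "\<phi> r \<le> \<phi> s" using mono_onD[OF m] by auto
    moreover have "\<phi> r \<noteq> \<phi> s"
    proof
      assume "\<phi> r = \<phi> s"
      then have "r = s" using inj_onD[OF inj _ rs(1) rs(2)] by blast
      then show False using rs(3) by simp
    qed
    ultimately show "\<phi> r < \<phi> s" by simp
  qed
  have z: "0 \<in> {0..real n}" "real n \<in> {0..real n}" by auto
  obtain s where s: "s \<in> {0..l}" "\<phi> s = 0" using z(1) unfolding im[symmetric] by (auto simp only: image_iff)
  obtain s' where s': "s' \<in> {0..l}" "\<phi> s' = real n" using z(2) unfolding im[symmetric] by (auto simp only: image_iff)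
  have l0: "0 \<in> {0..l}" "l \<in> {0..l}" using assms(2) by auto
  have a1: "\<phi> 0 \<le> \<phi> s" using mono_onD[OF m l0(1) s(1)] s(1) by simp
  have a2: "\<phi> s' \<le> \<phi> l" using mono_onD[OF m s'(1) l0(2)] s'(1) by simp
  have "\<phi> 0 \<in> {0..real n}" "\<phi> l \<in> {0..real n}" using l0 unfolding im[symmetric] by (auto simp only: image_iff)
  then have p0: "\<phi> 0 = 0" and pl: "\<phi> l = real n" using a1 a2 s(2) s'(2) by auto
  show ?thesis unfolding incb_def using assms(2) c sm p0 pl by simp
qed

lemma incb_Gset:
  assumes "incb l (real n) \<phi>" "\<phi> \<in> extensional {0..l}"
  shows "\<phi> \<in> Gset l n"
proof -
  note P = incb_props[OF assms(1)]
  have "homeomorphic_map (top_of_set {0..l}) (top_of_set {0..real n}) \<phi>"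
  proof (rule continuous_imp_homeomorphic_map)
    show "continuous_map (top_of_set {0..l}) (top_of_set {0..real n}) \<phi>"
      using P(1,6) by (auto simp: continuous_map_in_subtopology)
    show "compact_space (top_of_set {0..l})"
      by (rule compact_space_subtopology) simp
    show "Hausdorff_space (top_of_set {0..real n})"
      by (rule Hausdorff_space_subtopology) simp
  qed (use P(1,2) in auto)
  then show ?thesis unfolding Gset_def using assms(2) P(3) by simp
qed

lemma NsetD:
  assumes "\<gamma> \<in> (Nset d :: (real \<Rightarrow> real^'n::finite) set)"
  shows "tame_dpath d (real CARD('n)) \<gamma>" "\<gamma> 0 = vec 0" "\<gamma> (real CARD('n)) = vec 1"
    "\<gamma> \<in> extensional {0..real CARD('n)}"
    "\<And>t. t \<in> {0..real CARD('n)} \<Longrightarrow> sig (\<gamma> t) = t"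
proof -
  show t: "tame_dpath d (real CARD('n)) \<gamma>" and g0: "\<gamma> 0 = vec 0" and "\<gamma> (real CARD('n)) = vec 1"
    "\<gamma> \<in> extensional {0..real CARD('n)}" using assms unfolding Nset_def by auto
  have nat: "natural_path (real CARD('n)) \<gamma>" using assms unfolding Nset_def by auto
  fix t assume tt: "t \<in> {0..real CARD('n)}"
  obtain k tt' where "cube_dpath (real CARD('n)) \<gamma>" using tame_dpathD[OF t] by blast
  then have "\<gamma> t \<in> unit_cube" using cube_dpathD(2) tt by blast
  then have "\<And>i. \<bar>\<gamma> t $ i - \<gamma> 0 $ i\<bar> = \<gamma> t $ i" using g0 by (simp add: unit_cube_iff)
  then have "(\<Sum>i\<in>UNIV. \<bar>\<gamma> t $ i - \<gamma> 0 $ i\<bar>) = (\<Sum>i\<in>UNIV. \<gamma> t $ i)" by simp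
  moreover have "(\<Sum>i\<in>UNIV. \<bar>\<gamma> t $ i - \<gamma> 0 $ i\<bar>) = t" using nat tt unfolding natural_path_def by blast
  ultimately show "sig (\<gamma> t) = t" unfolding sig_def by simp
qed

lemma regular_strict:
  assumes "cube_dpath a \<gamma>" "regular_path a \<gamma>"
  shows "strict_mono_on {0..a} (\<lambda>s. sig (\<gamma> s))"
proof (rule strict_mono_onI)
  note D = cube_dpathD[OF assms(1)]
  fix r s assume rs: "r \<in> {0..a}" "s \<in> {0..a}" "r < s"
  have le: "\<And>i. \<gamma> r $ i \<le> \<gamma> s $ i" using D(3) rs by auto
  show "sig (\<gamma> r) < sig (\<gamma> s)"
  proof (rule ccontr)
    assume "\<not> sig (\<gamma> r) < sig (\<gamma> s)"
    then have "sig (\<gamma> r) = sig (\<gamma> s)" using sig_mono[OF le] by simp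
    then have eq: "\<gamma> r = \<gamma> s" using sig_eq_imp_eq[OF le] by simp
    have "\<gamma> u = \<gamma> r" if "u \<in> {r..s}" for u
    proof -
      show ?thesis
        unfolding vec_eq_iff
      proof
        fix i
        have "\<gamma> r $ i \<le> \<gamma> u $ i" "\<gamma> u $ i \<le> \<gamma> s $ i" using D(3) rs that by auto
        then show "\<gamma> u $ i = \<gamma> r $ i" using eq by simp
      qed
    qed
    moreover obtain u where "u \<in> {r..s}" "\<gamma> u \<noteq> \<gamma> r"
    proof -
      have "0 \<le> r \<and> r < s \<and> s \<le> a" using rs by auto
      then have "\<exists>t\<in>{r..s}. \<gamma> t \<noteq> \<gamma> r" using assms(2) unfolding regular_path_def by blast
      then show ?thesis using that by blast
    qed
    ultimately show False by blast
  qed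
qed

lemma exec_pathsD:
  assumes "\<gamma> \<in> (exec_paths d :: (real \<Rightarrow> real^'n::finite) set)"
  shows "tame_dpath d 1 \<gamma>" "\<gamma> 0 = vec 0" "\<gamma> 1 = vec 1" "incb 1 (real CARD('n)) (\<lambda>s. sig (\<gamma> s))"
proof -
  show t: "tame_dpath d 1 \<gamma>" and g0: "\<gamma> 0 = vec 0" and g1: "\<gamma> 1 = vec 1"
    using assms unfolding exec_paths_def by auto
  have r: "regular_path 1 \<gamma>" using assms unfolding exec_paths_def by auto
  obtain k tt where cd: "cube_dpath 1 \<gamma>" using tame_dpathD[OF t] by blast
  show "incb 1 (real CARD('n)) (\<lambda>s. sig (\<gamma> s))"
    unfolding incb_def using regular_strict[OF cd r] continuous_on_sig[OF cube_dpathD(1)[OF cd]] g0 g1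
    by simp
qed

lemma fwd_Pset:
  fixes \<gamma> :: "real \<Rightarrow> real^'n::finite"
  assumes l: "0 < l" and phi: "\<phi> \<in> Gset l CARD('n)" and gam: "\<gamma> \<in> Nset d"
  shows "reparam l (\<phi>, \<gamma>) \<in> Pset l d"
proof -
  have pi: "incb l (real CARD('n)) \<phi>" using G_incb[OF phi l] by simp
  define h where "h = (\<lambda>s. \<phi> (s * l))"
  have hi: "incb 1 (real CARD('n)) h" using incb_scale_dom[OF pi l] l unfolding h_def by simp
  note H = incb_props[OF hi]
  note N = NsetD[OF gam]
  define g where "g = \<gamma> \<circ> h"
  have t: "tame_dpath d 1 g" unfolding g_def by (rule tame_comp[OF N(1) hi])
  have hin: "h s \<in> {0..real CARD('n)}" if "s \<in> {0..1}" for s using H(1) that by blast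
  have sg: "sig (g s) = h s" if "s \<in> {0..1}" for s unfolding g_def using N(5)[OF hin[OF that]] by simp
  have reg: "regular_path 1 g"
    unfolding regular_path_def
  proof (intro allI impI)
    fix a b :: real assume ab: "0 \<le> a \<and> a < b \<and> b \<le> 1"
    have "h a < h b" using strict_mono_onD[of "{0..1}" h a b] hi ab unfolding incb_def by auto
    then have "g b \<noteq> g a" using sg[of a] sg[of b] ab by auto
    then show "\<exists>t\<in>{a..b}. g t \<noteq> g a" using ab by auto
  qed
  have g0: "g 0 = vec 0" and g1: "g 1 = vec 1" unfolding g_def using H(7,8) N(2,3) by auto
  have "g \<in> exec_paths d"
    unfolding exec_paths_def
  proof (intro CollectI conjI)
    show "\<exists>s t. 0 \<le> s \<and> s \<le> 1 \<and> 0 \<le> t \<and> t \<le> 1 \<and> g s \<noteq> g t"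
      using g0 g1 vec01 by (intro exI[of _ 0] exI[of _ 1]) simp
  qed (use t reg g0 g1 in auto)
  moreover have "reparam l (\<phi>, \<gamma>) = restrict (\<lambda>t. g (t / l)) {0..l}"
    unfolding reparam_def g_def h_def using l by (simp, intro restrict_ext) simp
  ultimately show ?thesis unfolding Pset_def by blast
qed

lemma PsetD:
  fixes p :: "real \<Rightarrow> real^'n::finite"
  assumes "p \<in> Pset l d"
  obtains g where "g \<in> exec_paths d" "p = restrict (\<lambda>t. g (t / l)) {0..l}"
  using assms unfolding Pset_def by blast

lemma Pset_q:
  fixes p :: "real \<Rightarrow> real^'n::finite"
  assumes l: "0 < l" and p: "p \<in> Pset l d"
  shows "incb l (real CARD('n)) (\<lambda>s. sig (p s))"
proof -
  obtain g where g: "g \<in> exec_paths d" "p = restrict (\<lambda>t. g (t / l)) {0..l}" using PsetD[OF p] by blast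
  note E = exec_pathsD[OF g(1)]
  have "incb l (real CARD('n)) (\<lambda>s. sig (g (s / l)))"
    using incb_scale_dom[OF E(4), of "1/l"] l by simp
  then show ?thesis by (rule incb_cong) (simp add: g(2))
qed

lemma bwd_sets:
  fixes p :: "real \<Rightarrow> real^'n::finite"
  assumes l: "0 < l" and p: "p \<in> Pset l d"
  shows "invphi l p \<in> Gset l CARD('n)" "invgam l p \<in> Nset d" "reparam l (invphi l p, invgam l p) = p"
proof -
  obtain g where g: "g \<in> exec_paths d" "p = restrict (\<lambda>t. g (t / l)) {0..l}" using PsetD[OF p] by blast
  note E = exec_pathsD[OF g(1)]
  define q where "q = (\<lambda>s. sig (p s))"
  have qi: "incb l (real CARD('n)) q" unfolding q_def by (rule Pset_q[OF l p])
  have "incb l (real CARD('n)) (invphi l p)" using qi by (rule incb_cong) (simp add: invphi_def q_def)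
  then show "invphi l p \<in> Gset l CARD('n)" by (rule incb_Gset) (simp add: invphi_def)
  define \<iota> where "\<iota> = inv_into {0..l} q"
  note I = incb_inv[OF qi, folded \<iota>_def]
  define h where "h = (\<lambda>t. \<iota> t / l)"
  have hi: "incb (real CARD('n)) 1 h" using incb_scale_cod[OF I(1) l] l unfolding h_def by simp
  note H = incb_props[OF hi]
  have pe: "p s = g (s / l)" if "s \<in> {0..l}" for s using g(2) that by simp
  have eq: "invgam l p t = (g \<circ> h) t" if t: "t \<in> {0..real CARD('n)}" for t
  proof -
    have "invgam l p t = p (\<iota> t)" using t unfolding invgam_def \<iota>_def q_def by simp
    also have "\<dots> = g (\<iota> t / l)" using pe I(2)[OF t] by simp
    finally show ?thesis unfolding h_def by simp
  qed
  have tame: "tame_dpath d (real CARD('n)) (invgam l p)"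
    by (rule tame_dpath_cong[OF tame_comp[OF E(1) hi]]) (simp add: eq)
  have sg: "sig (invgam l p t) = t" if t: "t \<in> {0..real CARD('n)}" for t
  proof -
    have "sig (invgam l p t) = q (\<iota> t)" using t unfolding invgam_def \<iota>_def q_def by simp
    then show ?thesis using I(3)[OF t] by simp
  qed
  have ig0: "invgam l p 0 = vec 0" using eq[of 0] H(7) E(2) by simp
  have ig1: "invgam l p (real CARD('n)) = vec 1" using eq[of "real CARD('n)"] H(8) E(3) by simp
  have nat: "natural_path (real CARD('n)) (invgam l p)"
    unfolding natural_path_def
  proof
    fix t assume t: "t \<in> {0..real CARD('n)}"
    obtain k tt where cd: "cube_dpath (real CARD('n)) (invgam l p)" using tame_dpathD[OF tame] by blast
    have "invgam l p t \<in> unit_cube" using cube_dpathD(2)[OF cd t] .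
    then have "\<And>i. \<bar>invgam l p t $ i - invgam l p 0 $ i\<bar> = invgam l p t $ i" using ig0 by (simp add: unit_cube_iff)
    then have "(\<Sum>i\<in>UNIV. \<bar>invgam l p t $ i - invgam l p 0 $ i\<bar>) = sig (invgam l p t)" by (simp add: sig_def)
    then show "(\<Sum>i\<in>UNIV. \<bar>invgam l p t $ i - invgam l p 0 $ i\<bar>) = t" using sg[OF t] by simp
  qed
  show "invgam l p \<in> Nset d"
    unfolding Nset_def using tame nat ig0 ig1 by (simp add: invgam_def)
  show "reparam l (invphi l p, invgam l p) = p"
  proof -
    have "reparam l (invphi l p, invgam l p) = restrict (\<lambda>s. g (s / l)) {0..l}"
      unfolding reparam_def prod.case
    proof (intro restrict_ext)
      fix s :: real assume s: "s \<in> {0..l}"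
      have qs: "q s \<in> {0..real CARD('n)}" using incb_props(1)[OF qi] s by blast
      have "invphi l p s = q s" using s by (simp add: invphi_def q_def)
      moreover have "invgam l p (q s) = p (\<iota> (q s))" using qs unfolding invgam_def \<iota>_def q_def by simp
      ultimately have "(invgam l p \<circ> invphi l p) s = p s" using I(4)[OF s] by simp
      then show "(invgam l p \<circ> invphi l p) s = g (s / l)" using pe[OF s] by simp
    qed
    then show ?thesis using g(2) by simp
  qed
qed

lemma bwd_fwd:
  fixes \<gamma> :: "real \<Rightarrow> real^'n::finite"
  assumes l: "0 < l" and phi: "\<phi> \<in> Gset l CARD('n)" and gam: "\<gamma> \<in> Nset d"
  shows "invphi l (reparam l (\<phi>, \<gamma>)) = \<phi>" "invgam l (reparam l (\<phi>, \<gamma>)) = \<gamma>"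
proof -
  have pi: "incb l (real CARD('n)) \<phi>" using G_incb[OF phi l] by simp
  note P = incb_props[OF pi]
  note N = NsetD[OF gam]
  have ext: "\<phi> \<in> extensional {0..l}" using phi unfolding Gset_def by (simp only: mem_Collect_eq)
  have sq: "sig (reparam l (\<phi>, \<gamma>) s) = \<phi> s" if s: "s \<in> {0..l}" for s
  proof -
    have "\<phi> s \<in> {0..real CARD('n)}" using P(1) s by blast
    then show ?thesis using N(5) s by (simp add: reparam_def)
  qed
  show "invphi l (reparam l (\<phi>, \<gamma>)) = \<phi>"
    by (rule extensionalityI[OF _ ext]) (auto simp: invphi_def sq)
  show "invgam l (reparam l (\<phi>, \<gamma>)) = \<gamma>"
  proof (rule extensionalityI[OF _ N(4)])
    show "invgam l (reparam l (\<phi>, \<gamma>)) \<in> extensional {0..real CARD('n)}" by (simp add: invgam_def)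
    fix t assume t: "t \<in> {0..real CARD('n)}"
    note I = incb_inv[OF pi]
    define s0 where "s0 = inv_into {0..l} \<phi> t"
    have s0: "s0 \<in> {0..l}" "\<phi> s0 = t" using I(2,3)[OF t] unfolding s0_def by auto
    have inj: "inj_on (\<lambda>s. sig (reparam l (\<phi>, \<gamma>) s)) {0..l}"
      using P(2) sq by (subst inj_on_cong) auto
    have "inv_into {0..l} (\<lambda>s. sig (reparam l (\<phi>, \<gamma>) s)) t = s0"
      by (rule inv_into_f_eq[OF inj s0(1)]) (use sq[OF s0(1)] s0(2) in simp)
    then show "invgam l (reparam l (\<phi>, \<gamma>)) t = \<gamma> t"
      using t s0 by (simp add: invgam_def reparam_def)
  qed
qed

lemma tame_const:
  fixes \<gamma> :: "real \<Rightarrow> real^'n::finite"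
  assumes "tame_dpath 0 l \<gamma>"
  shows "\<gamma> l = \<gamma> 0"
proof -
  obtain k t where kt: "cube_dpath l \<gamma>" "t 0 = 0" "t k = l" "\<forall>j<k. t j \<le> t (Suc j)"
     "\<forall>j\<le>k. \<gamma> (t j) \<in> cube_vertices"
     "\<forall>j<k. \<exists>F \<in> cube_faces 0. \<gamma> ` {t j..t (Suc j)} \<subseteq> F"
    using tame_dpathD[OF assms] by blast
  have single: "x = y" if Fin: "F \<in> cube_faces 0" and xy: "x \<in> F" "y \<in> F" for F :: "(real^'n) set" and x y
  proof -
    obtain I e where F: "F = {x \<in> unit_cube. \<forall>i\<in>I. x$i = e i}" "\<forall>i\<in>I. e i = 0 \<or> e i = 1" "card (UNIV - I) \<le> 0"
      using Fin unfolding cube_faces_def by blast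
    have "UNIV - I = {}" using F(3) by simp
    then have "\<forall>i. i \<in> I" by blast
    then show ?thesis using xy F(1) by (simp add: vec_eq_iff)
  qed
  have "\<gamma> (t j) = \<gamma> (t 0)" if "j \<le> k" for j
    using that
  proof (induction j)
    case 0 then show ?case by simp
  next
    case (Suc j)
    have jk: "j < k" using Suc.prems by simp
    then obtain F where F: "F \<in> cube_faces 0" "\<gamma> ` {t j..t (Suc j)} \<subseteq> F" using kt(6) by blast
    have "t j \<le> t (Suc j)" using kt(4) Suc by auto
    then have "\<gamma> (t j) \<in> F" "\<gamma> (t (Suc j)) \<in> F" using F(2) by auto
    then have "\<gamma> (t (Suc j)) = \<gamma> (t j)" using single F(1) by blast
    then show ?case using Suc.IH jk by simp
  qed
  then show ?thesis using kt(2,3) by (metis order_refl)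
qed

lemma Nset0_empty: "(Nset 0 :: (real \<Rightarrow> real^'n::finite) set) = {}"
proof -
  have False if "\<gamma> \<in> (Nset 0 :: (real \<Rightarrow> real^'n::finite) set)" for \<gamma>
    using tame_const[OF NsetD(1)[OF that]] NsetD(2,3)[OF that] vec01 by simp
  then show ?thesis by blast
qed

lemma PtopSet0_empty: "(PtopSet 0 :: (real \<Rightarrow> real^'n::finite) set) = {}"
proof -
  have False if "\<gamma> \<in> (exec_paths 0 :: (real \<Rightarrow> real^'n::finite) set)" for \<gamma>
    using tame_const[OF exec_pathsD(1)[OF that]] exec_pathsD(2,3)[OF that] vec01 by simp
  then show ?thesis unfolding PtopSet_def by blast
qed

lemma Gset_cmaps:
  assumes "\<phi> \<in> Gset l n"
  shows "\<phi> \<in> cmaps (top_of_set {0..l}) (top_of_set {0..real n})"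
proof -
  have G: "\<phi> \<in> extensional {0..l} \<and> homeomorphic_map (top_of_set {0..l}) (top_of_set {0..real n}) \<phi> \<and> mono_on {0..l} \<phi>"
    using assms unfolding Gset_def by (simp only: mem_Collect_eq)
  then have "continuous_map (top_of_set {0..l}) (top_of_set {0..real n}) \<phi>"
    using homeomorphic_imp_continuous_map by blast
  then show ?thesis using G unfolding cmaps_def by simp
qed

lemma Nset_cmaps:
  assumes "\<gamma> \<in> (Nset d :: (real \<Rightarrow> real^'n::finite) set)"
  shows "\<gamma> \<in> cmaps (top_of_set {0..real CARD('n)}) (top_of_set unit_cube)"
proof -
  note N = NsetD[OF assms]
  obtain k t where cd: "cube_dpath (real CARD('n)) \<gamma>" using tame_dpathD[OF N(1)] by blast
  note D = cube_dpathD[OF cd]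
  have "continuous_map (top_of_set {0..real CARD('n)}) (top_of_set unit_cube) \<gamma>"
    using D(1,2) by auto
  then show ?thesis using N(4) unfolding cmaps_def by simp
qed

lemma Pset_cmaps:
  fixes K :: "(real^'n::finite) set"
  assumes l: "0 < l" and K: "\<And>F. F \<in> cube_faces d \<Longrightarrow> F \<subseteq> K" and p: "p \<in> Pset l d"
  shows "p \<in> cmaps (top_of_set {0..l}) (top_of_set K)"
proof -
  obtain g where g: "g \<in> exec_paths d" "p = restrict (\<lambda>t. g (t / l)) {0..l}" using PsetD[OF p] by blast
  note E = exec_pathsD[OF g(1)]
  obtain k t where cd: "cube_dpath 1 g" using tame_dpathD[OF E(1)] by blast
  note D = cube_dpathD[OF cd]
  have sub: "(\<lambda>t. t / l) ` {0..l} \<subseteq> {0..1}" using l by auto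
  have c: "continuous_on {0..l} (\<lambda>t. g (t / l))"
    by (rule continuous_on_compose2[OF D(1) _ sub]) (use l in \<open>auto intro!: continuous_intros\<close>)
  have "continuous_on {0..l} p" using c by (rule continuous_on_eq) (simp add: g(2))
  moreover have "p t \<in> K" if t: "t \<in> {0..l}" for t
  proof -
    have "t / l \<in> {0..1}" using sub t by blast
    then obtain F where "F \<in> cube_faces d" "g (t / l) \<in> F" using tame_image[OF E(1)] by auto
    then show ?thesis using K g(2) t by auto
  qed
  ultimately have "continuous_map (top_of_set {0..l}) (top_of_set K) p" by auto
  then show ?thesis unfolding cmaps_def using g(2) by simp
qed

lemma topspace_ksub_TOP: "topspace (ksub (TOP X Y) S) = cmaps X Y \<inter> S"
  unfolding ksub_def TOP_def by simp

lemma topspace_Gtop: "topspace (Gtop l n) = Gset l n"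
  unfolding Gtop_def topspace_ksub_TOP using Gset_cmaps by blast

lemma topspace_Ntop: "topspace (Ntop d :: (real \<Rightarrow> real^'n::finite) topology) = Nset d"
  unfolding Ntop_def topspace_ksub_TOP using Nset_cmaps by blast

lemma topspace_Ptop:
  fixes K :: "(real^'n::finite) set"
  assumes "0 < l" "\<And>F. F \<in> cube_faces d \<Longrightarrow> F \<subseteq> K"
  shows "topspace (Ptop l d K) = Pset l d"
  unfolding Ptop_def topspace_ksub_TOP using Pset_cmaps[OF assms] by blast

lemma contA:
  fixes \<Gamma> :: "'z \<Rightarrow> real \<Rightarrow> real^'n::finite" and K :: "(real^'n) set"
  assumes l: "0 < l" and K: "\<And>F. F \<in> cube_faces d \<Longrightarrow> F \<subseteq> K"
    and Pc: "continuous_map Z (compact_open (top_of_set {0..l}) (top_of_set {0..real CARD('n)})) \<Phi>"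
    and Ps: "\<Phi> ` topspace Z \<subseteq> Gset l CARD('n)"
    and Gc: "continuous_map Z (compact_open (top_of_set {0..real CARD('n)}) (top_of_set unit_cube)) \<Gamma>"
    and Gs: "\<Gamma> ` topspace Z \<subseteq> Nset d"
  shows "continuous_map Z (compact_open (top_of_set {0..l}) (top_of_set K)) (\<lambda>u. reparam l (\<Phi> u, \<Gamma> u))"
proof -
  have J1: "continuous_map (prod_topology Z (top_of_set {0..l})) (top_of_set {0..real CARD('n)}) (\<lambda>(z,a). \<Phi> z a)"
    by (rule compact_open_joint[OF Pc]) simp
  have J2: "continuous_map (prod_topology Z (top_of_set {0..real CARD('n)})) (top_of_set unit_cube) (\<lambda>(z,a). \<Gamma> z a)"
    by (rule compact_open_joint[OF Gc]) simp
  have pr: "continuous_map (prod_topology Z (top_of_set {0..l})) (prod_topology Z (top_of_set {0..real CARD('n)}))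
      (\<lambda>(z,a). (z, \<Phi> z a))"
    unfolding continuous_map_pairwise
  proof
    have "fst \<circ> (\<lambda>(z,a). (z, \<Phi> z a)) = fst" by (auto simp: fun_eq_iff)
    then show "continuous_map (prod_topology Z (top_of_set {0..l})) Z (fst \<circ> (\<lambda>(z,a). (z, \<Phi> z a)))"
      using continuous_map_fst by metis
    have "snd \<circ> (\<lambda>(z,a). (z, \<Phi> z a)) = (\<lambda>(z,a). \<Phi> z a)" by (auto simp: fun_eq_iff)
    then show "continuous_map (prod_topology Z (top_of_set {0..l})) (top_of_set {0..real CARD('n)}) (snd \<circ> (\<lambda>(z,a). (z, \<Phi> z a)))"
      using J1 by metis
  qed
  have "(\<lambda>(z,a). \<Gamma> z a) \<circ> (\<lambda>(z,a). (z, \<Phi> z a)) = (\<lambda>(z,a). \<Gamma> z (\<Phi> z a))" by (auto simp: fun_eq_iff)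
  then have C: "continuous_map (prod_topology Z (top_of_set {0..l})) (top_of_set unit_cube) (\<lambda>(z,a). \<Gamma> z (\<Phi> z a))"
    using continuous_map_compose[OF pr J2] by metis
  have imK: "(\<lambda>(z,a). \<Gamma> z (\<Phi> z a)) x \<in> K" if x: "x \<in> topspace (prod_topology Z (top_of_set {0..l}))" for x
  proof -
    obtain z a where za: "x = (z,a)" "z \<in> topspace Z" "a \<in> {0..l}" using x by auto
    have "\<Phi> z \<in> Gset l CARD('n)" using Ps za by blast
    then have "incb l (real CARD('n)) (\<Phi> z)" using G_incb l by simp
    then have "\<Phi> z a \<in> {0..real CARD('n)}" using incb_props(1) za(3) by blast
    moreover have "\<Gamma> z \<in> Nset d" using Gs za by blast
    ultimately obtain F where "F \<in> cube_faces d" "\<Gamma> z (\<Phi> z a) \<in> F"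
      using tame_image[OF NsetD(1)] by (metis card_pos)
    then show ?thesis using K za by auto
  qed
  have CK: "continuous_map (prod_topology Z (top_of_set {0..l})) (top_of_set K) (\<lambda>(z,a). \<Gamma> z (\<Phi> z a))"
    using C imK unfolding continuous_map_in_subtopology by (auto simp: Pi_iff)
  have "continuous_map Z (compact_open (top_of_set {0..l}) (top_of_set K))
      (\<lambda>z. restrict (\<lambda>a. (\<lambda>(z,a). \<Gamma> z (\<Phi> z a)) (z,a)) (topspace (top_of_set {0..l})))"
    by (rule cont_into_compact_open[OF CK])
  moreover have "(\<lambda>z. restrict (\<lambda>a. (\<lambda>(z,a). \<Gamma> z (\<Phi> z a)) (z,a)) (topspace (top_of_set {0..l})))
      = (\<lambda>u. reparam l (\<Phi> u, \<Gamma> u))"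
    by (simp add: reparam_def fun_eq_iff o_def)
  ultimately show ?thesis by simp
qed

lemma contB:
  fixes Pm :: "'z \<Rightarrow> real \<Rightarrow> real^'n::finite" and K :: "(real^'n) set"
  assumes l: "0 < l" and K: "K \<subseteq> unit_cube"
    and Pc: "continuous_map Z (compact_open (top_of_set {0..l}) (top_of_set K)) Pm"
    and Ps: "Pm ` topspace Z \<subseteq> Pset l d"
    and Zc: "compact_space Z" and Zh: "Hausdorff_space Z"
  shows "continuous_map Z (compact_open (top_of_set {0..l}) (top_of_set {0..real CARD('n)})) (\<lambda>u. invphi l (Pm u))"
    "continuous_map Z (compact_open (top_of_set {0..real CARD('n)}) (top_of_set unit_cube)) (\<lambda>u. invgam l (Pm u))"
proof -
  let ?N = "real CARD('n)"
  have J: "continuous_map (prod_topology Z (top_of_set {0..l})) (top_of_set K) (\<lambda>(z,a). Pm z a)"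
    by (rule compact_open_joint[OF Pc]) simp
  have qi: "incb l ?N (\<lambda>s. sig (Pm z s))" if "z \<in> topspace Z" for z
    using Pset_q[OF l] Ps that by blast
  define Q where "Q = (\<lambda>(z,a). sig (Pm z a))"
  have sigc: "continuous_map euclidean euclidean (sig :: real^'n \<Rightarrow> real)"
    using continuous_on_sig[OF continuous_on_id, of UNIV] continuous_map_iff_continuous[of UNIV sig] by simp
  have JE: "continuous_map (prod_topology Z (top_of_set {0..l})) euclidean (\<lambda>(z,a). Pm z a)"
    using J unfolding continuous_map_in_subtopology by blast
  have eqQ: "sig \<circ> (\<lambda>(z,a). Pm z a) = Q" unfolding Q_def by (simp add: fun_eq_iff split_beta)
  have QE: "continuous_map (prod_topology Z (top_of_set {0..l})) euclidean Q"
    unfolding eqQ[symmetric] by (rule continuous_map_compose[OF JE sigc])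
  have Qim: "Q x \<in> {0..?N}" if x: "x \<in> topspace (prod_topology Z (top_of_set {0..l}))" for x
  proof -
    obtain z a where za: "x = (z,a)" "z \<in> topspace Z" "a \<in> {0..l}" using x by auto
    have "sig (Pm z a) \<in> (\<lambda>s. sig (Pm z s)) ` {0..l}" using za(3) by (rule imageI)
    then have "sig (Pm z a) \<in> {0..?N}" unfolding incb_props(1)[OF qi[OF za(2)]] .
    then show ?thesis using za(1) unfolding Q_def by simp
  qed
  have Qc: "continuous_map (prod_topology Z (top_of_set {0..l})) (top_of_set {0..?N}) Q"
    using QE Qim unfolding continuous_map_in_subtopology by (auto simp: Pi_iff)
  have "continuous_map Z (compact_open (top_of_set {0..l}) (top_of_set {0..?N}))
      (\<lambda>z. restrict (\<lambda>a. Q (z,a)) (topspace (top_of_set {0..l})))"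
    by (rule cont_into_compact_open[OF Qc])
  moreover have "(\<lambda>z. restrict (\<lambda>a. Q (z,a)) (topspace (top_of_set {0..l}))) = (\<lambda>u. invphi l (Pm u))"
    by (simp add: Q_def invphi_def fun_eq_iff)
  ultimately show "continuous_map Z (compact_open (top_of_set {0..l}) (top_of_set {0..?N})) (\<lambda>u. invphi l (Pm u))"
    by simp
  define H where "H = (\<lambda>x. (fst x, Q x))"
  have Hc: "continuous_map (prod_topology Z (top_of_set {0..l})) (prod_topology Z (top_of_set {0..?N})) H"
    unfolding continuous_map_pairwise H_def o_def using Qc continuous_map_fst by (simp add: o_def)
  have Hhom: "homeomorphic_map (prod_topology Z (top_of_set {0..l})) (prod_topology Z (top_of_set {0..?N})) H"
  proof (rule continuous_imp_homeomorphic_map[OF Hc])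
    show "compact_space (prod_topology Z (top_of_set {0..l}))"
      unfolding compact_space_prod_topology using Zc compact_space_subtopology[of euclidean "{0..l}"] by simp
    show "Hausdorff_space (prod_topology Z (top_of_set {0..?N}))"
      unfolding Hausdorff_space_prod_topology using Zh Hausdorff_space_subtopology[OF Hausdorff_space_euclidean, of "{0..?N}"] by simp
    show "H ` topspace (prod_topology Z (top_of_set {0..l})) = topspace (prod_topology Z (top_of_set {0..?N}))"
    proof
      show "H ` topspace (prod_topology Z (top_of_set {0..l})) \<subseteq> topspace (prod_topology Z (top_of_set {0..?N}))"
        using Qim unfolding H_def by auto
      show "topspace (prod_topology Z (top_of_set {0..?N})) \<subseteq> H ` topspace (prod_topology Z (top_of_set {0..l}))"
      proof
        fix y assume y: "y \<in> topspace (prod_topology Z (top_of_set {0..?N}))"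
        obtain z t where zt: "y = (z,t)" "z \<in> topspace Z" "t \<in> {0..?N}" using y by auto
        note I = incb_inv[OF qi[OF zt(2)]]
        define s where "s = inv_into {0..l} (\<lambda>s. sig (Pm z s)) t"
        have "s \<in> {0..l}" "sig (Pm z s) = t" using I(2,3)[OF zt(3)] unfolding s_def by auto
        then have "(z,s) \<in> topspace (prod_topology Z (top_of_set {0..l}))" "H (z,s) = y"
          using zt unfolding H_def Q_def by auto
        then show "y \<in> H ` topspace (prod_topology Z (top_of_set {0..l}))" by blast
      qed
    qed
    show "inj_on H (topspace (prod_topology Z (top_of_set {0..l})))"
    proof (rule inj_onI)
      fix x y assume x: "x \<in> topspace (prod_topology Z (top_of_set {0..l}))"
        and y: "y \<in> topspace (prod_topology Z (top_of_set {0..l}))" and e: "H x = H y"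
      obtain z a where za: "x = (z,a)" "z \<in> topspace Z" "a \<in> {0..l}" using x by auto
      obtain z' a' where za': "y = (z',a')" "z' \<in> topspace Z" "a' \<in> {0..l}" using y by auto
      have zz: "z' = z" using e za za' unfolding H_def by simp
      have "sig (Pm z a) = sig (Pm z a')" using e za za' zz unfolding H_def Q_def by simp
      then have "a = a'" using inj_onD[OF incb_props(2)[OF qi[OF za(2)]] _ za(3) za'(3)] by blast
      then show "x = y" using za za' zz by simp
    qed
  qed
  obtain g' where g': "homeomorphic_maps (prod_topology Z (top_of_set {0..l})) (prod_topology Z (top_of_set {0..?N})) H g'"
    using Hhom homeomorphic_map_maps by blast
  have g'c: "continuous_map (prod_topology Z (top_of_set {0..?N})) (prod_topology Z (top_of_set {0..l})) g'"
    and Hg': "\<And>y. y \<in> topspace (prod_topology Z (top_of_set {0..?N})) \<Longrightarrow> H (g' y) = y"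
    using g' unfolding homeomorphic_maps_def by auto
  define R where "R = (\<lambda>(z,t). Pm z (inv_into {0..l} (\<lambda>s. sig (Pm z s)) t))"
  have Req: "R y = ((\<lambda>(z,a). Pm z a) \<circ> g') y" if y: "y \<in> topspace (prod_topology Z (top_of_set {0..?N}))" for y
  proof -
    obtain z t where zt: "y = (z,t)" "z \<in> topspace Z" "t \<in> {0..?N}" using y by auto
    have "g' y \<in> topspace (prod_topology Z (top_of_set {0..l}))"
      using g'c y unfolding continuous_map_def by blast
    then obtain z' s where zs: "g' y = (z',s)" "z' \<in> topspace Z" "s \<in> {0..l}" by auto
    have "H (z',s) = (z,t)" using Hg'[OF y] zs zt by simp
    then have zz: "z' = z" and st: "sig (Pm z s) = t" unfolding H_def Q_def by auto
    have "inv_into {0..l} (\<lambda>s. sig (Pm z s)) t = s"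
      by (rule inv_into_f_eq[OF incb_props(2)[OF qi[OF zt(2)]] zs(3) st])
    then show ?thesis using zs zt zz unfolding R_def by simp
  qed
  have RK: "continuous_map (prod_topology Z (top_of_set {0..?N})) (top_of_set K) R"
    by (rule continuous_map_eq[OF continuous_map_compose[OF g'c J]]) (simp add: Req)
  have Rc: "continuous_map (prod_topology Z (top_of_set {0..?N})) (top_of_set unit_cube) R"
    using RK K unfolding continuous_map_in_subtopology by (auto simp: Pi_iff)
  have "continuous_map Z (compact_open (top_of_set {0..?N}) (top_of_set unit_cube))
      (\<lambda>z. restrict (\<lambda>t. R (z,t)) (topspace (top_of_set {0..?N})))"
    by (rule cont_into_compact_open[OF Rc])
  moreover have "(\<lambda>z. restrict (\<lambda>t. R (z,t)) (topspace (top_of_set {0..?N}))) = (\<lambda>u. invgam l (Pm u))"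
    by (simp add: R_def invgam_def fun_eq_iff)
  ultimately show "continuous_map Z (compact_open (top_of_set {0..?N}) (top_of_set unit_cube)) (\<lambda>u. invgam l (Pm u))"
    by simp
qed

lemma simplex_compact: "compact_space (simplex_top p)"
  by (rule compact_space_subtopology[OF compactin_standard_simplex])

lemma simplex_Hausdorff: "Hausdorff_space (simplex_top p)"
  by (rule Hausdorff_space_subtopology) (simp add: Hausdorff_space_product_topology)

lemma main_homeo:
  fixes K :: "(real^'n::finite) set"
  assumes l: "0 < l" and K1: "\<And>F. F \<in> cube_faces d \<Longrightarrow> F \<subseteq> K" and K2: "K \<subseteq> unit_cube"
  shows "homeomorphic_map (kprod (Gtop l CARD('n)) (Ntop d)) (Ptop l d K) (reparam l)"
proof -
  let ?N = "real CARD('n)"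
  let ?COG = "compact_open (top_of_set {0..l}) (top_of_set {0..?N})"
  let ?CON = "compact_open (top_of_set {0..?N}) (top_of_set (unit_cube :: (real^'n) set))"
  let ?COP = "compact_open (top_of_set {0..l}) (top_of_set K)"
  define X0 where "X0 = prod_topology (Gtop l CARD('n)) (Ntop d :: (real \<Rightarrow> real^'n) topology)"
  define Y0 where "Y0 = subtopology (kdelta ?COP) (Pset l d)"
  have kX: "kprod (Gtop l CARD('n)) (Ntop d) = kdelta X0" unfolding X0_def kprod_def ..
  have kY: "Ptop l d K = kdelta Y0" unfolding Y0_def Ptop_def ksub_def TOP_def ..
  have tX: "topspace X0 = Gset l CARD('n) \<times> Nset d" unfolding X0_def by (simp add: topspace_Gtop topspace_Ntop)
  have tY: "topspace Y0 = Pset l d" unfolding Y0_def using Pset_cmaps[OF l K1] by auto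
  have Gt: "Gtop l CARD('n) = ksub (kdelta ?COG) (Gset l CARD('n))" unfolding Gtop_def TOP_def ..
  have Nt: "(Ntop d :: (real \<Rightarrow> real^'n) topology) = ksub (kdelta ?CON) (Nset d)" unfolding Ntop_def TOP_def ..
  define g where "g = (\<lambda>p. (invphi l p, invgam l p :: real \<Rightarrow> real^'n))"
  have f_cont: "continuous_map (kdelta X0) (kdelta Y0) (reparam l)"
  proof (rule continuous_map_kdelta_kdelta)
    show "reparam l \<in> topspace X0 \<rightarrow> topspace Y0"
      unfolding tX tY using fwd_Pset[OF l] by auto
    fix p and u :: "(nat \<Rightarrow> real) \<Rightarrow> (real \<Rightarrow> real) \<times> (real \<Rightarrow> real^'n)"
    assume u: "continuous_map (simplex_top p) X0 u"
    have u1: "continuous_map (simplex_top p) ?COG (fst \<circ> u)" "(fst \<circ> u) ` standard_simplex p \<subseteq> Gset l CARD('n)"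
      using u unfolding X0_def continuous_map_pairwise Gt continuous_map_simplex_ksub by auto
    have u2: "continuous_map (simplex_top p) ?CON (snd \<circ> u)" "(snd \<circ> u) ` standard_simplex p \<subseteq> Nset d"
      using u unfolding X0_def continuous_map_pairwise Nt continuous_map_simplex_ksub by auto
    have "continuous_map (simplex_top p) ?COP (\<lambda>z. reparam l ((fst \<circ> u) z, (snd \<circ> u) z))"
      using contA[OF l K1 u1(1) _ u2(1)] u1(2) u2(2) by simp
    then have c: "continuous_map (simplex_top p) ?COP (reparam l \<circ> u)" by (simp add: o_def)
    have "(reparam l \<circ> u) ` standard_simplex p \<subseteq> Pset l d"
    proof
      fix y assume "y \<in> (reparam l \<circ> u) ` standard_simplex p"
      then obtain z where z: "z \<in> standard_simplex p" "y = reparam l (u z)" by auto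
      have "fst (u z) \<in> Gset l CARD('n)" "snd (u z) \<in> Nset d" using u1(2) u2(2) z(1) by auto
      then have "reparam l (fst (u z), snd (u z)) \<in> Pset l d" by (rule fwd_Pset[OF l])
      then show "y \<in> Pset l d" using z(2) by simp
    qed
    then show "continuous_map (simplex_top p) Y0 (reparam l \<circ> u)"
      unfolding Y0_def continuous_map_in_subtopology continuous_map_simplex_kdelta using c
      by (simp add: image_subset_iff_funcset o_def)
  qed
  have g_cont: "continuous_map (kdelta Y0) (kdelta X0) g"
  proof (rule continuous_map_kdelta_kdelta)
    show "g \<in> topspace Y0 \<rightarrow> topspace X0"
      unfolding tX tY g_def using bwd_sets[OF l] by auto
    fix p and u :: "(nat \<Rightarrow> real) \<Rightarrow> (real \<Rightarrow> real^'n)"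
    assume u: "continuous_map (simplex_top p) Y0 u"
    have uc: "continuous_map (simplex_top p) ?COP u" and us: "u ` standard_simplex p \<subseteq> Pset l d"
      using u unfolding Y0_def continuous_map_in_subtopology continuous_map_simplex_kdelta
      by (auto simp: image_subset_iff_funcset)
    note B = contB[OF l K2 uc _ simplex_compact simplex_Hausdorff]
    have B1: "continuous_map (simplex_top p) ?COG (\<lambda>z. invphi l (u z))" using B(1) us by simp
    have B2: "continuous_map (simplex_top p) ?CON (\<lambda>z. invgam l (u z))" using B(2) us by simp
    have s1: "(fst \<circ> (g \<circ> u)) ` standard_simplex p \<subseteq> Gset l CARD('n)"
      using us bwd_sets(1)[OF l] unfolding g_def by auto
    have s2: "(snd \<circ> (g \<circ> u)) ` standard_simplex p \<subseteq> Nset d"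
      using us bwd_sets(2)[OF l] unfolding g_def by auto
    have "fst \<circ> (g \<circ> u) = (\<lambda>z. invphi l (u z))" "snd \<circ> (g \<circ> u) = (\<lambda>z. invgam l (u z))"
      unfolding g_def by (auto simp: fun_eq_iff)
    then show "continuous_map (simplex_top p) X0 (g \<circ> u)"
      unfolding X0_def continuous_map_pairwise Gt Nt continuous_map_simplex_ksub
      using B1 B2 s1 s2 by simp
  qed
  have "homeomorphic_maps (kdelta X0) (kdelta Y0) (reparam l) g"
    unfolding homeomorphic_maps_def
  proof (intro conjI f_cont g_cont ballI)
    fix x assume "x \<in> topspace (kdelta X0)"
    then obtain a b where ab: "x = (a,b)" "a \<in> Gset l CARD('n)" "b \<in> Nset d" unfolding topspace_kdelta tX by auto
    show "g (reparam l x) = x" unfolding g_def ab(1) using bwd_fwd[OF l ab(2,3)] by simp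
  next
    fix y assume "y \<in> topspace (kdelta Y0)"
    then have "y \<in> Pset l d" unfolding topspace_kdelta tY by simp
    then show "reparam l (g y) = y" unfolding g_def by (rule bwd_sets(3)[OF l])
  qed
  then show ?thesis unfolding kX kY homeomorphic_map_maps by blast
qed

lemma PtopTop_eq:
  fixes K :: "(real^'n::finite) set"
  shows "PtopTop d K = Ptop 1 d K"
proof -
  have "PtopSet d = (Pset 1 d :: (real \<Rightarrow> real^'n::finite) set)"
    unfolding PtopSet_def Pset_def by simp
  then show ?thesis unfolding PtopTop_def Ptop_def by simp
qed

lemma card_m1_less: "CARD('n::finite) - 1 < CARD('n)"
  using zero_less_card_finite[where 'a='n] by linarith

theorem proposition5p5:
  fixes l :: real
  assumes "l > 0"
  shows "homeomorphic_map (kprod (Gtop l CARD('n)) (Ntop CARD('n)))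
            (Ptop l CARD('n) (unit_cube :: (real^'n::finite) set)) (reparam l)
       \<and> homeomorphic_map (kprod (Gtop l CARD('n)) (Ntop (CARD('n) - 1)))
            (Ptop l (CARD('n) - 1) (cube_boundary :: (real^'n::finite) set)) (reparam l)
       \<and> homeomorphic_map (kprod (Gtop 1 CARD('n)) (Ntop CARD('n)))
            (PtopTop CARD('n) (unit_cube :: (real^'n::finite) set)) (reparam 1)
       \<and> homeomorphic_map (kprod (Gtop 1 CARD('n)) (Ntop (CARD('n) - 1)))
            (PtopTop (CARD('n) - 1) (cube_boundary :: (real^'n::finite) set)) (reparam 1)
       \<and> (CARD('n) = 1 \<longrightarrow> (Nset 0 :: (real \<Rightarrow> real^'n) set) = {} \<and>
            (PtopSet 0 :: (real \<Rightarrow> real^'n) set) = {})"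
proof -
  have cpos: "0 < CARD('n)" by simp
  have K1: "\<And>F. F \<in> cube_faces CARD('n) \<Longrightarrow> F \<subseteq> (unit_cube :: (real^'n) set)"
    by (rule face_sub_cube)
  have K1': "\<And>F. F \<in> cube_faces (CARD('n) - 1) \<Longrightarrow> F \<subseteq> (cube_boundary :: (real^'n) set)"
    by (erule face_sub_boundary) (rule card_m1_less)
  have K2: "(cube_boundary :: (real^'n) set) \<subseteq> unit_cube" unfolding cube_boundary_def by auto
  show ?thesis
    using main_homeo[OF assms K1 order_refl] main_homeo[OF assms K1' K2]
      main_homeo[OF zero_less_one K1 order_refl] main_homeo[OF zero_less_one K1' K2]
      Nset0_empty[where 'n='n] PtopSet0_empty[where 'n='n]
    by (simp add: PtopTop_eq)
qed

end
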